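(* Let $S,T\subseteq\mathbb{Z}_{>0}$ be finite and let $x$ be such that $T_{\ge x}\preceq S_{>x}$. Then $$T\triangleleft S=(T_{<x}\triangleleft S_{\le x})\sqcup(T_{\ge x}\triangleleft S_{>x}).$$
   Context: For a finite set $S\subseteq\mathbb{Z}_{>0}$, $S(i)$ is its $i$th smallest element, and $S_{<x},S_{\le x},S_{>x},S_{\ge x}$ denote the subsets of elements $<x$, $\le x$, $>x$, $\ge x$. For finite $S,T$, $T\triangleleft S$ is computed by going through $S$ from largest to smallest; each $s$ picks the largest element of $T$ less than $s$ not yet picked (if one exists); $T\triangleleft S$ is the set of picked elements. We write $T\preceq S$ ($S$ dominates $T$) if $|T|\ge|S|$ and $T(i)<S(i)$ for all $i\in[|S|]$. *)

theory Defs
  imports Main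
begin

text \<open>S(i): the i-th smallest element of a finite set (1-based, i.e. i \<in> {1..card S}).\<close>
definition ith :: "int set \<Rightarrow> nat \<Rightarrow> int" where
  "ith S i = sorted_list_of_set S ! (i - 1)"

fun pick :: "int set \<Rightarrow> int list \<Rightarrow> int set" where
  "pick T [] = {}"
| "pick T (s # ss) =
     (if {t \<in> T. t < s} = {} then pick T ss
      else (let m = Max {t \<in> T. t < s} in insert m (pick (T - {m}) ss)))"

definition tri :: "int set \<Rightarrow> int set \<Rightarrow> int set" (infix "\<triangleleft>" 60) where
  "T \<triangleleft> S = pick T (rev (sorted_list_of_set S))"

definition dominated :: "int set \<Rightarrow> int set \<Rightarrow> bool" (infix "\<preceq>" 50) where
  "T \<preceq> S \<longleftrightarrow> card T \<ge> card S \<and> (\<forall>i \<in> {1..card S}. ith T i < ith S i)"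

end

theory Submission
  imports Defs
begin

lemma pick_subset: "finite Q \<Longrightarrow> pick Q M \<subseteq> Q"
proof (induction M arbitrary: Q)
  case Nil then show ?case by simp
next
  case (Cons s M)
  show ?case
  proof (cases "{t \<in> Q. t < s} = {}")
    case True then show ?thesis using Cons by simp
  next
    case False
    let ?m = "Max {t \<in> Q. t < s}"
    have "?m \<in> Q" using Max_in[of "{t \<in> Q. t < s}"] False Cons.prems by auto
    moreover have "pick (Q - {?m}) M \<subseteq> Q - {?m}" using Cons by simp
    ultimately show ?thesis using False by (auto simp: Let_def)
  qed
qed

lemma pick_Cons_ne: "{t \<in> Q. t < s} \<noteq> {} \<Longrightarrow>
  pick Q (s # L) = insert (Max {t \<in> Q. t < s}) (pick (Q - {Max {t \<in> Q. t < s}}) L)"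
  by (simp only: pick.simps Let_def if_False)

lemma pick_Cons_e: "{t \<in> Q. t < s} = {} \<Longrightarrow> pick Q (s # L) = pick Q L"
  by simp

declare pick.simps(2)[simp del]

lemma pick_append: "pick Q (L @ M) = pick Q L \<union> pick (Q - pick Q L) M"
proof (induction L arbitrary: Q)
  case Nil then show ?case by simp
next
  case (Cons s L)
  show ?case
  proof (cases "{t \<in> Q. t < s} = {}")
    case True then show ?thesis using Cons by (simp only: pick_Cons_e append_Cons)
  next
    case False
    define m where "m = Max {t \<in> Q. t < s}"
    have "pick Q ((s # L) @ M) = insert m (pick (Q - {m}) (L @ M))"
      using pick_Cons_ne[OF False] by (simp add: m_def)
    also have "\<dots> = insert m (pick (Q - {m}) L \<union> pick (Q - {m} - pick (Q - {m}) L) M)"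
      using Cons by simp
    also have "Q - {m} - pick (Q - {m}) L = Q - insert m (pick (Q - {m}) L)" by auto
    finally have c: "pick Q ((s # L) @ M) = insert m (pick (Q - {m}) L \<union> pick (Q - insert m (pick (Q - {m}) L)) M)" .
    have eq: "pick Q (s # L) = insert m (pick (Q - {m}) L)"
      using pick_Cons_ne[OF False] by (simp add: m_def)
    show ?thesis unfolding eq using c by simp
  qed
qed

lemma pick_restrict: "\<forall>s\<in>set M. s \<le> x \<Longrightarrow> pick Q M = pick {t \<in> Q. t < x} M"
proof (induction M arbitrary: Q)
  case Nil then show ?case by simp
next
  case (Cons s M)
  have e: "{t \<in> {t \<in> Q. t < x}. t < s} = {t \<in> Q. t < s}" using Cons.prems by auto
  have e2: "{t \<in> Q - {m}. t < x} = {t \<in> Q. t < x} - {m}" for m by auto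
  have ih: "pick Q' M = pick {t \<in> Q'. t < x} M" for Q' using Cons by simp
  show ?case
  proof (cases "{t \<in> Q. t < s} = {}")
    case True
    then show ?thesis using ih[of Q] e pick_Cons_e by metis
  next
    case False
    have F2: "{t \<in> {t \<in> Q. t < x}. t < s} \<noteq> {}" using False e by simp
    show ?thesis
      unfolding pick_Cons_ne[OF False] pick_Cons_ne[OF F2] e
      using ih[of "Q - {Max {t \<in> Q. t < s}}"] e2 by simp
  qed
qed

lemma pick_main:
  assumes "sorted_wrt (>) L" "finite P"
    and "\<forall>s\<in>set L. card {s' \<in> set L. s' \<le> s} \<le> card {a \<in> P. x \<le> a \<and> a < s}"
  shows "pick P L = pick {a \<in> P. x \<le> a} L"
  using assms
proof (induction L arbitrary: P)
  case Nil then show ?case by simp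
next
  case (Cons s L)
  let ?C = "{a \<in> P. x \<le> a \<and> a < s}"
  have fC: "finite ?C" using Cons.prems(2) by simp
  have sL: "s \<notin> set L" using Cons.prems(1) by auto
  have "card {s' \<in> set (s # L). s' \<le> s} = card (set (s # L))"
  proof -
    have "{s' \<in> set (s # L). s' \<le> s} = set (s # L)" using Cons.prems(1) by force
    thus ?thesis by simp
  qed
  hence cs: "card ?C \<ge> Suc (card (set L))"
    using Cons.prems(3) sL by (simp add: card_insert_if)
  hence "card ?C \<noteq> 0" by linarith
  hence "?C \<noteq> {}" by (metis card.empty)
  then obtain a0 where a0: "a0 \<in> P" "x \<le> a0" "a0 < s" by auto
  let ?D = "{t \<in> P. t < s}"
  define m where "m = Max ?D"
  have fD: "finite ?D" using Cons.prems(2) by simp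
  have nD: "?D \<noteq> {}" using a0 by auto
  have mD: "m \<in> ?D" unfolding m_def using Max_in[OF fD nD] .
  have mge: "\<forall>t\<in>?D. t \<le> m" unfolding m_def using Max_ge[OF fD] by auto
  have mx: "x \<le> m" using mge a0 by force
  let ?A = "{a \<in> P. x \<le> a}"
  have e1: "{t \<in> ?A. t < s} \<noteq> {}" using a0 by auto
  have e2: "Max {t \<in> ?A. t < s} = m"
  proof (rule Max_eqI)
    show "finite {t \<in> ?A. t < s}" using Cons.prems(2) by simp
    show "y \<le> m" if "y \<in> {t \<in> ?A. t < s}" for y using that mge by auto
    show "m \<in> {t \<in> ?A. t < s}" using mD mx by auto
  qed
  have e3: "?A - {m} = {a \<in> P - {m}. x \<le> a}" by auto
  have IH: "pick (P - {m}) L = pick {a \<in> P - {m}. x \<le> a} L"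
  proof (rule Cons.IH)
    show "sorted_wrt (>) L" using Cons.prems(1) by simp
    show "finite (P - {m})" using Cons.prems(2) by simp
    show "\<forall>s'\<in>set L. card {s'' \<in> set L. s'' \<le> s'} \<le> card {a \<in> P - {m}. x \<le> a \<and> a < s'}"
    proof
      fix s' assume s': "s' \<in> set L"
      have ss: "s' < s" using Cons.prems(1) s' by simp
      show "card {s'' \<in> set L. s'' \<le> s'} \<le> card {a \<in> P - {m}. x \<le> a \<and> a < s'}"
      proof (cases "m < s'")
        case True
        have "{a \<in> P - {m}. x \<le> a \<and> a < s'} = ?C - {m}"
          using True ss mge by force
        hence "card {a \<in> P - {m}. x \<le> a \<and> a < s'} = card ?C - 1"
          using mD mx fC by simp
        moreover have "card {s'' \<in> set L. s'' \<le> s'} \<le> card (set L)"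
          by (rule card_mono) auto
        ultimately show ?thesis using cs by simp
      next
        case False
        have "{a \<in> P - {m}. x \<le> a \<and> a < s'} = {a \<in> P. x \<le> a \<and> a < s'}"
          using False by auto
        moreover have "card {s'' \<in> set (s # L). s'' \<le> s'} \<le> card {a \<in> P. x \<le> a \<and> a < s'}"
          using Cons.prems(3) s' by simp
        moreover have "{s'' \<in> set (s # L). s'' \<le> s'} = {s'' \<in> set L. s'' \<le> s'}"
          using ss by auto
        ultimately show ?thesis by simp
      qed
    qed
  qed
  have l: "pick P (s # L) = insert m (pick (P - {m}) L)"
    using pick_Cons_ne[OF nD] by (simp only: m_def)
  have r: "pick ?A (s # L) = insert m (pick (?A - {m}) L)"
    using pick_Cons_ne[OF e1] e2 by (simp only:)
  show ?case using l r IH e3 by simp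
qed

lemma sls_split: "finite (S::int set) \<Longrightarrow> sorted_list_of_set S = sorted_list_of_set {s\<in>S. s \<le> x} @ sorted_list_of_set {s\<in>S. s > x}"
proof -
  assume f: "finite S"
  let ?l = "sorted_list_of_set {s\<in>S. s \<le> x} @ sorted_list_of_set {s\<in>S. s > x}"
  have "sorted_wrt (<) ?l" using f by (simp add: sorted_wrt_append) 
  moreover have "set ?l = S" using f by auto
  moreover have "distinct ?l" using f by (simp add: set_eq_iff) 
  ultimately show ?thesis using f
    by (metis sorted_list_of_set.idem_if_sorted_distinct strict_sorted_iff)
qed

theorem proposition4p12:
  fixes S T :: "int set" and x :: int
  assumes "finite S" "finite T" "\<forall>s\<in>S. s > 0" "\<forall>t\<in>T. t > 0"
    and "{t \<in> T. t \<ge> x} \<preceq> {s \<in> S. s > x}"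
  shows "T \<triangleleft> S = ({t \<in> T. t < x} \<triangleleft> {s \<in> S. s \<le> x}) \<union> ({t \<in> T. t \<ge> x} \<triangleleft> {s \<in> S. s > x})
     \<and> ({t \<in> T. t < x} \<triangleleft> {s \<in> S. s \<le> x}) \<inter> ({t \<in> T. t \<ge> x} \<triangleleft> {s \<in> S. s > x}) = {}"
proof -
  define A where "A = {t \<in> T. t \<ge> x}"
  define B where "B = {t \<in> T. t < x}"
  define S1 where "S1 = {s \<in> S. s > x}"
  define S2 where "S2 = {s \<in> S. s \<le> x}"
  define L where "L = rev (sorted_list_of_set S1)"
  define M where "M = rev (sorted_list_of_set S2)"
  have fA: "finite A" and fB: "finite B" and fS1: "finite S1" and fS2: "finite S2"
    using assms(1,2) by (auto simp: A_def B_def S1_def S2_def)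
  have split: "sorted_list_of_set S = sorted_list_of_set S2 @ sorted_list_of_set S1"
    unfolding S1_def S2_def using sls_split[OF assms(1)] .
  have LM: "rev (sorted_list_of_set S) = L @ M"
    using split by (simp add: L_def M_def)
  have dom: "card A \<ge> card S1" "\<forall>i\<in>{1..card S1}. ith A i < ith S1 i"
    using assms(5) unfolding dominated_def A_def S1_def by auto
  have cond: "\<forall>s\<in>set L. card {s' \<in> set L. s' \<le> s} \<le> card {a \<in> T. x \<le> a \<and> a < s}"
  proof
    fix s assume "s \<in> set L"
    hence sS1: "s \<in> S1" using fS1 by (simp add: L_def)
    define ys where "ys = sorted_list_of_set S1"
    define xs where "xs = sorted_list_of_set A"
    have sys: "sorted_wrt (<) ys" unfolding ys_def by simp
    have sxs: "sorted_wrt (<) xs" unfolding xs_def by simp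
    have lys: "length ys = card S1" unfolding ys_def by simp
    have lxs: "length xs = card A" unfolding xs_def by simp
    obtain j where j: "j < length ys" "ys ! j = s"
      using sS1 fS1 by (metis in_set_conv_nth set_sorted_list_of_set ys_def)
    have lt: "xs ! i < ys ! i" if "i < length ys" for i
    proof -
      have "ith A (Suc i) < ith S1 (Suc i)" using dom(2) that lys by auto
      thus ?thesis by (simp add: ith_def xs_def ys_def)
    qed
    have "{s' \<in> set L. s' \<le> s} \<subseteq> (\<lambda>i. ys ! i) ` {..j}"
    proof
      fix s' assume "s' \<in> {s' \<in> set L. s' \<le> s}"
      hence s': "s' \<in> set ys" "s' \<le> s" by (auto simp: L_def ys_def)
      then obtain i where i: "i < length ys" "ys ! i = s'" by (metis in_set_conv_nth)
      have "i \<le> j"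
      proof (rule ccontr)
        assume "\<not> i \<le> j"
        hence "ys ! j < ys ! i" using sys i(1) sorted_wrt_nth_less by fastforce
        thus False using s' i j by simp
      qed
      thus "s' \<in> (\<lambda>i. ys ! i) ` {..j}" using i by auto
    qed
    hence c1: "card {s' \<in> set L. s' \<le> s} \<le> Suc j"
      by (metis card_atMost card_image_le card_mono finite_atMost finite_imageI le_trans)
    have sub: "(\<lambda>i. xs ! i) ` {..j} \<subseteq> {a \<in> T. x \<le> a \<and> a < s}"
    proof
      fix a assume "a \<in> (\<lambda>i. xs ! i) ` {..j}"
      then obtain i where i: "i \<le> j" "a = xs ! i" by auto
      have il: "i < length xs" using i j lys lxs dom(1) by linarith
      have "a \<in> A" using i il fA by (metis nth_mem set_sorted_list_of_set xs_def)
      moreover have "a < s"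
      proof -
        have "xs ! i < ys ! i" using lt i j by simp
        also have "ys ! i \<le> ys ! j"
        proof (cases "i = j")
          case False
          hence "i < j" using i by simp
          thus ?thesis using sorted_wrt_nth_less[OF sys _ j(1)] by force
        qed simp
        finally show ?thesis using j i by simp
      qed
      ultimately show "a \<in> {a \<in> T. x \<le> a \<and> a < s}" by (auto simp: A_def)
    qed
    have inj: "inj_on (\<lambda>i. xs ! i) {..j}"
    proof (rule inj_onI)
      fix i k assume "i \<in> {..j}" "k \<in> {..j}" "xs ! i = xs ! k"
      moreover have "distinct xs" unfolding xs_def by simp
      moreover have "i < length xs" "k < length xs" using calculation j lys lxs dom(1) by auto
      ultimately show "i = k" using nth_eq_iff_index_eq by blast
    qed
    have "Suc j = card ((\<lambda>i. xs ! i) ` {..j})" using card_image[OF inj] by simp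
    also have "\<dots> \<le> card {a \<in> T. x \<le> a \<and> a < s}"
      using sub assms(2) by (intro card_mono) auto
    finally show "card {s' \<in> set L. s' \<le> s} \<le> card {a \<in> T. x \<le> a \<and> a < s}"
      using c1 by simp
  qed
  have sL: "sorted_wrt (>) L" unfolding L_def by (simp add: sorted_wrt_rev)
  have pL: "pick T L = pick A L"
    using pick_main[OF sL assms(2) cond] by (simp add: A_def)
  have pA: "pick A L \<subseteq> A" using pick_subset fA by blast
  have Mx: "\<forall>s\<in>set M. s \<le> x" using fS2 by (auto simp: M_def S2_def)
  have pM: "pick (T - pick A L) M = pick B M"
  proof -
    have "pick (T - pick A L) M = pick {t \<in> T - pick A L. t < x} M"
      using pick_restrict[OF Mx] by blast
    also have "{t \<in> T - pick A L. t < x} = B" using pA by (auto simp: A_def B_def)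
    finally show ?thesis .
  qed
  have main: "T \<triangleleft> S = (B \<triangleleft> S2) \<union> (A \<triangleleft> S1)"
    unfolding tri_def LM pick_append pL pM by (auto simp: L_def M_def)
  have pB: "B \<triangleleft> S2 \<subseteq> B" unfolding tri_def using pick_subset fB by blast
  have pA2: "A \<triangleleft> S1 \<subseteq> A" unfolding tri_def using pick_subset fA by blast
  have disj: "(B \<triangleleft> S2) \<inter> (A \<triangleleft> S1) = {}" 
  proof -
    have "B \<inter> A = {}" by (auto simp: A_def B_def)
    thus ?thesis using pB pA2 by blast
  qed
  show ?thesis using main disj by (simp add: A_def B_def S1_def S2_def)
qed

end
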